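(* No absolute prime has all four of the digits $1,3,7,9$ appearing in its decimal representation.
   Context: For a positive integer $N$ with decimal representation $d_1d_2\dots d_n$ (digits $d_k\in\{0,\dots,9\}$, $d_1\neq 0$), a permutation of the digits of $N$ is any integer $\sum_{k=1}^{n} d_{\sigma(k)}10^{n-k}$ with $\sigma$ a permutation of $\{1,\dots,n\}$. $N$ is called an absolute prime if every integer obtained by a permutation of the digits of $N$ (including $N$ itself) is prime. *)

theory Defs
  imports "HOL-Computational_Algebra.Primes" "HOL-Library.Multiset"
begin

text \<open>Decimal digits of a positive integer, most significant first
  (for n = 0 this gives [0], irrelevant since N is positive).\<close>
fun decimal_digits :: "nat \<Rightarrow> nat list" where
  "decimal_digits n = (if n < 10 then [n] else decimal_digits (n div 10) @ [n mod 10])"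

definition from_digits :: "nat list \<Rightarrow> nat" where
  "from_digits ds = foldl (\<lambda>a d. 10 * a + d) 0 ds"

definition absolute_prime :: "nat \<Rightarrow> bool" where
  "absolute_prime N \<longleftrightarrow> N > 0 \<and>
     (\<forall>ds. mset ds = mset (decimal_digits N) \<longrightarrow> prime (from_digits ds))"

end

theory Submission
  imports Defs
begin

lemma foldl_dig: "foldl (\<lambda>a d. 10 * a + d) a ys = a * 10 ^ length ys + foldl (\<lambda>a d. 10 * a + d) (0::nat) ys"
proof (induction ys arbitrary: a)
  case Nil then show ?case by simp
next
  case (Cons y ys)
  have "foldl (\<lambda>a d. 10 * a + d) a (y # ys) = foldl (\<lambda>a d. 10 * a + d) (10*a+y) ys" by simp
  also have "\<dots> = (10*a+y) * 10 ^ length ys + foldl (\<lambda>a d. 10 * a + d) 0 ys" by (rule Cons.IH)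
  also have "foldl (\<lambda>a d. 10 * a + d) 0 (y#ys) = y * 10 ^ length ys + foldl (\<lambda>a d. 10 * a + d) 0 ys"
    using Cons.IH[of y] by simp
  ultimately show ?case by (simp add: algebra_simps)
qed

lemma fd_app4: "from_digits (xs @ [a,b,c,d]) = from_digits xs * 10000 + (1000*a+100*b+10*c+d)"
  unfolding from_digits_def by (subst foldl_append, subst foldl_dig) simp

lemma modred: "(r::nat) mod 7 = k \<Longrightarrow> (r*10000+p) mod 7 = (k*10000+p) mod 7"
  by (metis mod_add_left_eq mod_mult_left_eq)

lemma notprime7: "7 dvd (q::nat) \<Longrightarrow> q > 7 \<Longrightarrow> \<not> prime q"
  unfolding prime_nat_iff by force

theorem lemma2:
  fixes N :: nat
  assumes "absolute_prime N"
  shows "\<not> ({1, 3, 7, 9} \<subseteq> set (decimal_digits N))"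
proof
  assume S: "{1, 3, 7, 9} \<subseteq> set (decimal_digits N)"
  define L where "L = decimal_digits N"
  define rs where "rs = remove1 9 (remove1 7 (remove1 3 (remove1 1 L)))"
  have m1: "1 \<in> set L" "3 \<in> set L" "7 \<in> set L" "9 \<in> set L" using S L_def by auto
  have R: "x \<in> set xs \<Longrightarrow> mset xs = add_mset x (mset (remove1 x xs))" for x :: nat and xs
    by (simp add: insert_DiffM)
  have "mset L = mset rs + {#1,3,7,9#}"
    unfolding rs_def
    apply (subst R[of 1 L], fact)
    apply (subst R[of 3 "remove1 1 L"], simp add: in_set_remove1 m1)
    apply (subst R[of 7 "remove1 3 (remove1 1 L)"], simp add: in_set_remove1 m1)
    apply (subst R[of 9 "remove1 7 (remove1 3 (remove1 1 L))"], simp add: in_set_remove1 m1)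
    by (simp add: add_mset_commute)
  hence P: "\<And>a b c d. {#a,b,c,d#} = {#1,3,7,9::nat#} \<Longrightarrow> prime (from_digits rs * 10000 + (1000*a+100*b+10*c+d))"
    using assms unfolding absolute_prime_def L_def
    by (metis fd_app4 mset_append mset.simps add_mset_add_single union_commute)
  define r where "r = from_digits rs"
  have "r mod 7 < 7" by simp
  then consider "r mod 7 = 0" | "r mod 7 = 1" | "r mod 7 = 2" | "r mod 7 = 3" | "r mod 7 = 4" | "r mod 7 = 5" | "r mod 7 = 6" by linarith
  then show False
  proof cases
    case 1 have "prime (r*10000 + 1379)" using P[of 1 3 7 9] r_def by (simp add: add_mset_commute)
    moreover have "7 dvd r*10000 + 1379" using modred[OF 1, of 1379] by (simp add: dvd_eq_mod_eq_0)
    ultimately show False using notprime7 by force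
  next
    case 2 have "prime (r*10000 + 1739)" using P[of 1 7 3 9] r_def by (simp add: add_mset_commute)
    moreover have "7 dvd r*10000 + 1739" using modred[OF 2, of 1739] by (simp add: dvd_eq_mod_eq_0)
    ultimately show False using notprime7 by force
  next
    case 3 have "prime (r*10000 + 1973)" using P[of 1 9 7 3] r_def by (simp add: add_mset_commute)
    moreover have "7 dvd r*10000 + 1973" using modred[OF 3, of 1973] by (simp add: dvd_eq_mod_eq_0)
    ultimately show False using notprime7 by force
  next
    case 4 have "prime (r*10000 + 3719)" using P[of 3 7 1 9] r_def by (simp add: add_mset_commute)
    moreover have "7 dvd r*10000 + 3719" using modred[OF 4, of 3719] by (simp add: dvd_eq_mod_eq_0)
    ultimately show False using notprime7 by force
  next
    case 5 have "prime (r*10000 + 1937)" using P[of 1 9 3 7] r_def by (simp add: add_mset_commute)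
    moreover have "7 dvd r*10000 + 1937" using modred[OF 5, of 1937] by (simp add: dvd_eq_mod_eq_0)
    ultimately show False using notprime7 by force
  next
    case 6 have "prime (r*10000 + 1793)" using P[of 1 7 9 3] r_def by (simp add: add_mset_commute)
    moreover have "7 dvd r*10000 + 1793" using modred[OF 6, of 1793] by (simp add: dvd_eq_mod_eq_0)
    ultimately show False using notprime7 by force
  next
    case 7 have "prime (r*10000 + 1397)" using P[of 1 3 9 7] r_def by (simp add: add_mset_commute)
    moreover have "7 dvd r*10000 + 1397" using modred[OF 7, of 1397] by (simp add: dvd_eq_mod_eq_0)
    ultimately show False using notprime7 by force
  qed
qed

end
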